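(* Over the theory $\mathrm{IKP}-\Delta_0\text{ Bounding}$ (i.e. IKP with the $\Delta_0$ Bounding schema removed), the following three axiom schemes are equivalent: (1) $\Pi$ Persistence; (2) $\Pi$ Uniformity; (3) $\Delta_0$ Uniformity.
   Context: All theories are over intuitionistic first-order logic in the language $\{\in,=\}$. IKP has the axioms: Extensionality, Empty Set, Pairing, Union, Infinity in the form $\exists x\,[0\in x\wedge\forall y\in x\,\exists z\in x\,(z=y\cup\{y\})\wedge\forall y\in x\,(y=0\vee\exists z\in x\; y=z\cup\{z\})]$, the $\in$-Induction schema $\forall x(\forall y\in x\,\phi(y)\to\phi(x))\to\forall x\,\phi(x)$ for all formulas $\phi$, $\Delta_0$ Separation, and $\Delta_0$ Bounding: $\forall x\in A\,\exists y\,\phi(x,y)\to\exists B\,\forall x\in A\,\exists y\in B\,\phi(x,y)$ for $\Delta_0$ $\phi$ (parameters allowed). A $\Delta_0$ formula has only bounded quantifiers. $\Pi$ formulas are the closure of the $\Delta_0$ formulas under $\wedge,\vee$, unbounded $\forall$, and bounded quantifiers $\forall u\in v$, $\exists u\in v$. For a formula $\phi$ and a set $A$, $\phi^{(A)}$ is obtained by bounding every unbounded quantifier of $\phi$ by $A$. $\Pi$ Persistence: $\forall A\,\phi^{(A)}\to\phi$ for every $\Pi$ formula $\phi$. $\Pi$ Uniformity: $\forall B\,\exists x\in A\,\forall y\in B\,\phi(x,y)\to\exists x\in A\,\forall y\,\phi(x,y)$ for every $\Pi$ formula $\phi$ (parameters allowed). $\Delta_0$ Uniformity: the same schema restricted to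 $\Delta_0$ formulas $\phi$. *)

theory Defs
  imports Main
begin

text \<open>Bounded quantifiers are primitive
  constructors: BAll x y p is (forall x in y. p), BEx x y p is (exists x in y. p).
  Their meaning is fixed by logical axioms below (for x different from y).\<close>

datatype fm =
    Mem nat nat
  | Eq nat nat
  | Bot
  | Conj fm fm
  | Disj fm fm
  | Imp fm fm
  | All nat fm
  | Ex nat fm
  | BAll nat nat fm
  | BEx nat nat fm

definition Neg :: "fm \<Rightarrow> fm" where "Neg p = Imp p Bot"
definition Iff :: "fm \<Rightarrow> fm \<Rightarrow> fm" where "Iff p q = Conj (Imp p q) (Imp q p)"

fun fv :: "fm \<Rightarrow> nat set" where
  "fv (Mem x y) = {x, y}"
| "fv (Eq x y) = {x, y}"
| "fv Bot = {}"
| "fv (Conj p q) = fv p \<union> fv q"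
| "fv (Disj p q) = fv p \<union> fv q"
| "fv (Imp p q) = fv p \<union> fv q"
| "fv (All x p) = fv p - {x}"
| "fv (Ex x p) = fv p - {x}"
| "fv (BAll x y p) = insert y (fv p - {x})"
| "fv (BEx x y p) = insert y (fv p - {x})"

fun vars :: "fm \<Rightarrow> nat set" where
  "vars (Mem x y) = {x, y}"
| "vars (Eq x y) = {x, y}"
| "vars Bot = {}"
| "vars (Conj p q) = vars p \<union> vars q"
| "vars (Disj p q) = vars p \<union> vars q"
| "vars (Imp p q) = vars p \<union> vars q"
| "vars (All x p) = insert x (vars p)"
| "vars (Ex x p) = insert x (vars p)"
| "vars (BAll x y p) = insert x (insert y (vars p))"
| "vars (BEx x y p) = insert x (insert y (vars p))"

definition rn :: "nat \<Rightarrow> nat \<Rightarrow> nat \<Rightarrow> nat" where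
  "rn x y v = (if v = x then y else v)"

text \<open>subst p x y: replace the free occurrences of x in p by y (no renaming;
  used only together with the side condition substitutable).\<close>
fun subst :: "fm \<Rightarrow> nat \<Rightarrow> nat \<Rightarrow> fm" where
  "subst (Mem u v) x y = Mem (rn x y u) (rn x y v)"
| "subst (Eq u v) x y = Eq (rn x y u) (rn x y v)"
| "subst Bot x y = Bot"
| "subst (Conj p q) x y = Conj (subst p x y) (subst q x y)"
| "subst (Disj p q) x y = Disj (subst p x y) (subst q x y)"
| "subst (Imp p q) x y = Imp (subst p x y) (subst q x y)"
| "subst (All z p) x y = (if z = x then All z p else All z (subst p x y))"
| "subst (Ex z p) x y = (if z = x then Ex z p else Ex z (subst p x y))"
| "subst (BAll z w p) x y =
     (if z = x then BAll z (rn x y w) p else BAll z (rn x y w) (subst p x y))"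
| "subst (BEx z w p) x y =
     (if z = x then BEx z (rn x y w) p else BEx z (rn x y w) (subst p x y))"

text \<open>substitutable y x p: y is free for x in p.\<close>
fun substitutable :: "nat \<Rightarrow> nat \<Rightarrow> fm \<Rightarrow> bool" where
  "substitutable y x (Mem u v) = True"
| "substitutable y x (Eq u v) = True"
| "substitutable y x Bot = True"
| "substitutable y x (Conj p q) = (substitutable y x p \<and> substitutable y x q)"
| "substitutable y x (Disj p q) = (substitutable y x p \<and> substitutable y x q)"
| "substitutable y x (Imp p q) = (substitutable y x p \<and> substitutable y x q)"
| "substitutable y x (All z p) =
     (z = x \<or> x \<notin> fv p \<or> (z \<noteq> y \<and> substitutable y x p))"
| "substitutable y x (Ex z p) =
     (z = x \<or> x \<notin> fv p \<or> (z \<noteq> y \<and> substitutable y x p))"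
| "substitutable y x (BAll z w p) =
     (z = x \<or> x \<notin> fv p \<or> (z \<noteq> y \<and> substitutable y x p))"
| "substitutable y x (BEx z w p) =
     (z = x \<or> x \<notin> fv p \<or> (z \<noteq> y \<and> substitutable y x p))"

text \<open>prov T p: p is derivable from the set of (possibly open) axioms T.
  Open axioms behave as their universal closures (parameters allowed).\<close>
inductive prov :: "fm set \<Rightarrow> fm \<Rightarrow> bool" where
  ax: "p \<in> T \<Longrightarrow> prov T p"
| K: "prov T (Imp p (Imp q p))"
| S: "prov T (Imp (Imp p (Imp q r)) (Imp (Imp p q) (Imp p r)))"
| conjE1: "prov T (Imp (Conj p q) p)"
| conjE2: "prov T (Imp (Conj p q) q)"
| conjI: "prov T (Imp p (Imp q (Conj p q)))"
| disjI1: "prov T (Imp p (Disj p q))"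
| disjI2: "prov T (Imp q (Disj p q))"
| disjE: "prov T (Imp (Imp p r) (Imp (Imp q r) (Imp (Disj p q) r)))"
| botE: "prov T (Imp Bot p)"
| allE: "substitutable y x p \<Longrightarrow> prov T (Imp (All x p) (subst p x y))"
| exI: "substitutable y x p \<Longrightarrow> prov T (Imp (subst p x y) (Ex x p))"
| ballD: "x \<noteq> y \<Longrightarrow> prov T (Imp (BAll x y p) (All x (Imp (Mem x y) p)))"
| ballI: "x \<noteq> y \<Longrightarrow> prov T (Imp (All x (Imp (Mem x y) p)) (BAll x y p))"
| bexD: "x \<noteq> y \<Longrightarrow> prov T (Imp (BEx x y p) (Ex x (Conj (Mem x y) p)))"
| bexI: "x \<noteq> y \<Longrightarrow> prov T (Imp (Ex x (Conj (Mem x y) p)) (BEx x y p))"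
| eqRefl: "prov T (Eq x x)"
| eqMemL: "prov T (Imp (Eq x y) (Imp (Mem x z) (Mem y z)))"
| eqMemR: "prov T (Imp (Eq x y) (Imp (Mem z x) (Mem z y)))"
| eqEq: "prov T (Imp (Eq x y) (Imp (Eq x z) (Eq y z)))"
| mp: "prov T (Imp p q) \<Longrightarrow> prov T p \<Longrightarrow> prov T q"
| genAll: "prov T (Imp q p) \<Longrightarrow> x \<notin> fv q \<Longrightarrow> prov T (Imp q (All x p))"
| genEx: "prov T (Imp p q) \<Longrightarrow> x \<notin> fv q \<Longrightarrow> prov T (Imp (Ex x p) q)"

definition derives :: "fm set \<Rightarrow> fm set \<Rightarrow> bool" where
  "derives T S = (\<forall>p\<in>S. prov T p)"

inductive Delta0 :: "fm \<Rightarrow> bool" where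
  "Delta0 (Mem x y)"
| "Delta0 (Eq x y)"
| "Delta0 Bot"
| "Delta0 p \<Longrightarrow> Delta0 q \<Longrightarrow> Delta0 (Conj p q)"
| "Delta0 p \<Longrightarrow> Delta0 q \<Longrightarrow> Delta0 (Disj p q)"
| "Delta0 p \<Longrightarrow> Delta0 q \<Longrightarrow> Delta0 (Imp p q)"
| "x \<noteq> y \<Longrightarrow> Delta0 p \<Longrightarrow> Delta0 (BAll x y p)"
| "x \<noteq> y \<Longrightarrow> Delta0 p \<Longrightarrow> Delta0 (BEx x y p)"

inductive PiF :: "fm \<Rightarrow> bool" where
  "Delta0 p \<Longrightarrow> PiF p"
| "PiF p \<Longrightarrow> PiF q \<Longrightarrow> PiF (Conj p q)"
| "PiF p \<Longrightarrow> PiF q \<Longrightarrow> PiF (Disj p q)"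
| "PiF p \<Longrightarrow> PiF (All x p)"
| "x \<noteq> y \<Longrightarrow> PiF p \<Longrightarrow> PiF (BAll x y p)"
| "x \<noteq> y \<Longrightarrow> PiF p \<Longrightarrow> PiF (BEx x y p)"

fun rel :: "nat \<Rightarrow> fm \<Rightarrow> fm" where
  "rel A (Mem x y) = Mem x y"
| "rel A (Eq x y) = Eq x y"
| "rel A Bot = Bot"
| "rel A (Conj p q) = Conj (rel A p) (rel A q)"
| "rel A (Disj p q) = Disj (rel A p) (rel A q)"
| "rel A (Imp p q) = Imp (rel A p) (rel A q)"
| "rel A (All x p) = BAll x A (rel A p)"
| "rel A (Ex x p) = BEx x A (rel A p)"
| "rel A (BAll x y p) = BAll x y (rel A p)"
| "rel A (BEx x y p) = BEx x y (rel A p)"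

definition emptyF :: "nat \<Rightarrow> nat \<Rightarrow> fm" where
  "emptyF y w = BAll w y Bot"

definition succF :: "nat \<Rightarrow> nat \<Rightarrow> nat \<Rightarrow> fm" where
  "succF z y w = Conj (BAll w z (Disj (Mem w y) (Eq w y)))
                      (Conj (BAll w y (Mem w z)) (Mem y z))"

definition Extensionality :: fm where
  "Extensionality = All 0 (All 1 (Imp (All 2 (Iff (Mem 2 0) (Mem 2 1))) (Eq 0 1)))"

definition EmptySet :: fm where
  "EmptySet = Ex 0 (All 1 (Neg (Mem 1 0)))"

definition Pairing :: fm where
  "Pairing = All 0 (All 1 (Ex 2 (Conj (Mem 0 2) (Mem 1 2))))"

definition Union :: fm where
  "Union = All 0 (Ex 1 (BAll 2 0 (BAll 3 2 (Mem 3 1))))"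

definition Infinity :: fm where
  "Infinity = Ex 0 (Conj (BEx 1 0 (emptyF 1 2))
     (Conj (BAll 3 0 (BEx 4 0 (succF 4 3 5)))
           (BAll 3 0 (Disj (emptyF 3 5) (BEx 4 0 (succF 3 4 5))))))"

definition EpsInduction :: "fm set" where
  "EpsInduction = {Imp (All x (Imp (BAll y x (subst p x y)) p)) (All x p) | p x y.
      x \<noteq> y \<and> y \<notin> fv p \<and> substitutable y x p}"

definition Delta0Sep :: "fm set" where
  "Delta0Sep = {All a (Ex b (All x (Iff (Mem x b) (Conj (Mem x a) p)))) | p a b x.
      Delta0 p \<and> distinct [a, b, x] \<and> b \<notin> fv p}"

definition IKP_minus_Bounding :: "fm set" where
  "IKP_minus_Bounding = {Extensionality, EmptySet, Pairing, Union, Infinity}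
     \<union> EpsInduction \<union> Delta0Sep"

definition PiPersistence :: "fm set" where
  "PiPersistence = {Imp (All A (rel A p)) p | p A. PiF p \<and> A \<notin> vars p}"

definition UniformitySchema :: "(fm \<Rightarrow> bool) \<Rightarrow> fm set" where
  "UniformitySchema C = {Imp (All B (BEx x A (BAll y B p))) (BEx x A (All y p)) | p A B x y.
      C p \<and> distinct [A, B, x, y] \<and> B \<notin> fv p}"

definition PiUniformity :: "fm set" where
  "PiUniformity = UniformitySchema PiF"

definition Delta0Uniformity :: "fm set" where
  "Delta0Uniformity = UniformitySchema Delta0"

end

theory Submission
  imports Defs
begin


section \<open>Syntax\<close>

lemma finite_vars: "finite (vars p)" by (induct p) auto
lemma fv_vars: "fv p \<subseteq> vars p" by (induct p) auto
lemma fv_notin: "y \<notin> vars p \<Longrightarrow> y \<notin> fv p" using fv_vars by blast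
lemma subst_same[simp]: "subst p x x = p" by (induct p) (auto simp: rn_def)
lemma substitutable_same[simp]: "substitutable x x p" by (induct p) auto
lemma subst_nofv: "x \<notin> fv p \<Longrightarrow> subst p x y = p" by (induct p) (auto simp: rn_def)
lemma substitutable_nofv: "x \<notin> fv p \<Longrightarrow> substitutable y x p" by (induct p) auto
lemma substitutable_fresh: "y \<notin> vars p \<Longrightarrow> substitutable y x p" by (induct p) auto
lemma rel_Delta0: "Delta0 p \<Longrightarrow> rel A p = p" by (induct rule: Delta0.induct) auto
lemma vars_rel: "vars (rel A p) \<subseteq> insert A (vars p)" by (induct p) auto
lemma fv_rel: "fv (rel A p) \<subseteq> insert A (fv p)" by (induct p) auto
lemma subst_rel: "A \<notin> vars p \<Longrightarrow> subst (rel A p) A U = rel U p" by (induct p) (auto simp: rn_def)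
lemma Delta0_rel: "PiF p \<Longrightarrow> A \<notin> vars p \<Longrightarrow> Delta0 (rel A p)"
  by (induct rule: PiF.induct) (auto simp: rel_Delta0 intro: Delta0.intros)
lemma subst_back: "y \<notin> vars p \<Longrightarrow> subst (subst p x y) y x = p"
  by (induct p) (auto simp: rn_def subst_nofv fv_notin)
lemma fv_subst: "x \<noteq> y \<Longrightarrow> x \<notin> fv (subst p x y)"
  by (induct p) (auto simp: rn_def)
lemma substitutable_back: "y \<notin> vars p \<Longrightarrow> substitutable x y (subst p x y)"
  by (induct p) (auto simp: fv_notin)

section \<open>Logic\<close>

lemma I: "prov T (Imp p p)"
  by (rule prov.mp[OF prov.mp[OF prov.S[of T p "Imp p p" p] prov.K] prov.K])

lemma weaken: "prov T q \<Longrightarrow> prov T (Imp p q)"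
  by (rule prov.mp[OF prov.K])

lemma mpC: "prov T (Imp G (Imp p q)) \<Longrightarrow> prov T (Imp G p) \<Longrightarrow> prov T (Imp G q)"
  by (rule prov.mp[OF prov.mp[OF prov.S]])

lemma itrans: "prov T (Imp p q) \<Longrightarrow> prov T (Imp q r) \<Longrightarrow> prov T (Imp p r)"
  by (rule mpC[OF weaken])

lemma conjC: "prov T (Imp G p) \<Longrightarrow> prov T (Imp G q) \<Longrightarrow> prov T (Imp G (Conj p q))"
  by (rule mpC[OF mpC[OF weaken[OF prov.conjI]]])

lemma conj1C: "prov T (Imp G (Conj p q)) \<Longrightarrow> prov T (Imp G p)"
  by (rule itrans[OF _ prov.conjE1])
lemma conj2C: "prov T (Imp G (Conj p q)) \<Longrightarrow> prov T (Imp G q)"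
  by (rule itrans[OF _ prov.conjE2])

lemma mpC2: "prov T (Imp G (Imp h (Imp X p))) \<Longrightarrow> prov T (Imp G (Imp h X)) \<Longrightarrow> prov T (Imp G (Imp h p))"
  by (rule mpC[OF mpC[OF weaken[OF prov.S]]])

lemma curry: "prov T (Imp (Conj G h) p) \<Longrightarrow> prov T (Imp G (Imp h p))"
  by (rule mpC2[OF weaken[OF weaken] prov.conjI])

lemma uncurry: "prov T (Imp G (Imp h p)) \<Longrightarrow> prov T (Imp (Conj G h) p)"
  by (rule mpC[OF itrans[OF prov.conjE1] prov.conjE2])

lemma hyp: "prov T (Imp (Conj G h) h)" by (rule prov.conjE2)
lemma lift: "prov T (Imp G p) \<Longrightarrow> prov T (Imp (Conj G h) p)"
  by (rule itrans[OF prov.conjE1])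

lemma swap: "prov T (Imp (Conj G p) r) \<Longrightarrow> prov T (Imp p (Imp G r))"
proof -
  assume a: "prov T (Imp (Conj G p) r)"
  have "prov T (Imp (Conj p G) (Conj G p))"
    by (rule conjC[OF prov.conjE2 prov.conjE1])
  then show ?thesis using a by (rule curry[OF itrans])
qed

lemma disjEC: "prov T (Imp G (Disj p q)) \<Longrightarrow> prov T (Imp (Conj G p) r) \<Longrightarrow> prov T (Imp (Conj G q) r)
   \<Longrightarrow> prov T (Imp G r)"
proof -
  assume a: "prov T (Imp G (Disj p q))" "prov T (Imp (Conj G p) r)" "prov T (Imp (Conj G q) r)"
  have "prov T (Imp G (Imp (Imp p r) (Imp (Imp q r) (Imp (Disj p q) r))))" by (rule weaken[OF prov.disjE])
  then have "prov T (Imp G (Imp (Imp q r) (Imp (Disj p q) r)))" using curry[OF a(2)] by (rule mpC)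
  then have "prov T (Imp G (Imp (Disj p q) r))" using curry[OF a(3)] by (rule mpC)
  then show ?thesis using a(1) by (rule mpC)
qed

lemma botC: "prov T (Imp G Bot) \<Longrightarrow> prov T (Imp G r)"
  by (rule itrans[OF _ prov.botE])

lemma allEC: "prov T (Imp G (All x p)) \<Longrightarrow> substitutable y x p \<Longrightarrow> prov T (Imp G (subst p x y))"
  by (rule itrans[OF _ prov.allE])

lemma allEC': "prov T (Imp G (All x p)) \<Longrightarrow> prov T (Imp G p)"
  using allEC[of T G x p x] by simp

lemma allIC: "prov T (Imp G p) \<Longrightarrow> x \<notin> fv G \<Longrightarrow> prov T (Imp G (All x p))"
  by (rule prov.genAll)

definition Top :: fm where "Top = Imp Bot Bot"

lemma Top: "prov T Top" unfolding Top_def by (rule I)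
lemma fv_Top[simp]: "fv Top = {}" "vars Top = {}" "subst Top x y = Top" "substitutable y x Top"
  by (auto simp: Top_def)

lemma gen: "prov T p \<Longrightarrow> prov T (All x p)"
proof -
  assume "prov T p"
  then have "prov T (Imp Top p)" by (rule weaken)
  then have "prov T (Imp Top (All x p))" by (rule allIC) simp
  then show ?thesis using Top by (rule prov.mp)
qed

lemma exIC: "prov T (Imp G (subst p x y)) \<Longrightarrow> substitutable y x p \<Longrightarrow> prov T (Imp G (Ex x p))"
  by (rule itrans[OF _ prov.exI])

lemma exIC': "prov T (Imp G p) \<Longrightarrow> prov T (Imp G (Ex x p))"
  using exIC[of T G p x x] by simp

lemma exEC: "prov T (Imp G (Ex x p)) \<Longrightarrow> prov T (Imp (Conj G p) r) \<Longrightarrow> x \<notin> fv G \<Longrightarrow> x \<notin> fv r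
  \<Longrightarrow> prov T (Imp G r)"
proof -
  assume a: "prov T (Imp G (Ex x p))" "prov T (Imp (Conj G p) r)" "x \<notin> fv G" "x \<notin> fv r"
  have "prov T (Imp p (Imp G r))" using a(2) by (rule swap)
  then have "prov T (Imp (Ex x p) (Imp G r))" by (rule prov.genEx) (use a in simp)
  then have "prov T (Imp G (Imp G r))" by (rule itrans[OF a(1)])
  then show ?thesis using I by (rule mpC)
qed

lemma ballEC: "prov T (Imp G (BAll x y p)) \<Longrightarrow> x \<noteq> y \<Longrightarrow> substitutable z x p
   \<Longrightarrow> prov T (Imp G (Imp (Mem z y) (subst p x z)))"
proof -
  assume a: "prov T (Imp G (BAll x y p))" "x \<noteq> y" "substitutable z x p"
  have "prov T (Imp G (All x (Imp (Mem x y) p)))" using a(1) prov.ballD[OF a(2)] by (rule itrans)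
  then have "prov T (Imp G (subst (Imp (Mem x y) p) x z))" by (rule allEC) (use a in simp)
  then show ?thesis using a by (simp add: rn_def)
qed

lemma ballEC': "prov T (Imp G (BAll x y p)) \<Longrightarrow> x \<noteq> y \<Longrightarrow> prov T (Imp G (Imp (Mem x y) p))"
  using ballEC[of T G x y p x] by simp

lemma ballIC: "prov T (Imp (Conj G (Mem x y)) p) \<Longrightarrow> x \<notin> fv G \<Longrightarrow> x \<noteq> y \<Longrightarrow> prov T (Imp G (BAll x y p))"
  by (rule itrans[OF allIC[OF curry] prov.ballI])

lemma bexIC: "prov T (Imp G (Mem z y)) \<Longrightarrow> prov T (Imp G (subst p x z)) \<Longrightarrow> x \<noteq> y
   \<Longrightarrow> substitutable z x p \<Longrightarrow> prov T (Imp G (BEx x y p))"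
proof -
  assume a: "prov T (Imp G (Mem z y))" "prov T (Imp G (subst p x z))" "x \<noteq> y" "substitutable z x p"
  have "prov T (Imp G (subst (Conj (Mem x y) p) x z))" using conjC[OF a(1,2)] a(3) by (simp add: rn_def)
  then have "prov T (Imp G (Ex x (Conj (Mem x y) p)))" by (rule exIC) (use a in simp)
  then show ?thesis using prov.bexI[OF a(3)] by (rule itrans)
qed

lemma bexIC': "prov T (Imp G (Mem x y)) \<Longrightarrow> prov T (Imp G p) \<Longrightarrow> x \<noteq> y \<Longrightarrow> prov T (Imp G (BEx x y p))"
  using bexIC[of T G x y p x] by simp

lemma bexEC: "prov T (Imp G (BEx x y p)) \<Longrightarrow> prov T (Imp (Conj G (Conj (Mem x y) p)) r)
  \<Longrightarrow> x \<notin> fv G \<Longrightarrow> x \<notin> fv r \<Longrightarrow> x \<noteq> y \<Longrightarrow> prov T (Imp G r)"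
  by (rule exEC[OF itrans[OF _ prov.bexD]])

lemma all_mono: "prov T (Imp p q) \<Longrightarrow> prov T (Imp (All x p) (All x q))"
proof -
  assume a: "prov T (Imp p q)"
  have "prov T (Imp (All x p) p)" by (rule allEC'[OF I])
  then have "prov T (Imp (All x p) q)" using a by (rule itrans)
  then show ?thesis by (rule allIC) simp
qed

lemma ex_mono: "prov T (Imp p q) \<Longrightarrow> prov T (Imp (Ex x p) (Ex x q))"
proof -
  assume "prov T (Imp p q)"
  then have "prov T (Imp p (Ex x q))" by (rule exIC')
  then show ?thesis by (rule prov.genEx) simp
qed

lemma ball_mono: "prov T (Imp p q) \<Longrightarrow> x \<noteq> y \<Longrightarrow> prov T (Imp (BAll x y p) (BAll x y q))"
proof -
  assume a: "prov T (Imp p q)" "x \<noteq> y"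
  have "prov T (Imp (Conj (BAll x y p) (Mem x y)) p)"
    by (rule uncurry[OF ballEC'[OF I a(2)]])
  then have "prov T (Imp (Conj (BAll x y p) (Mem x y)) q)" using a(1) by (rule itrans)
  then show ?thesis by (rule ballIC) (use a in auto)
qed

lemma bex_mono: "prov T (Imp p q) \<Longrightarrow> x \<noteq> y \<Longrightarrow> prov T (Imp (BEx x y p) (BEx x y q))"
proof -
  assume a: "prov T (Imp p q)" "x \<noteq> y"
  have "prov T (Imp (Conj (BEx x y p) (Conj (Mem x y) p)) (BEx x y q))"
    apply (rule bexIC')
    apply (rule conj1C[OF hyp])
    apply (rule itrans[OF conj2C[OF hyp] a(1)])
    by (rule a)
  then show ?thesis by (rule bexEC[OF I]) (use a in auto)
qed

lemma all_rename: "y \<notin> vars p \<Longrightarrow> y \<noteq> x \<Longrightarrow> prov T (Imp (All x p) (All y (subst p x y)))"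
  by (rule allIC, rule allEC[OF I]) (auto simp: fv_notin substitutable_fresh)

lemma ex_rename: "y \<notin> vars p \<Longrightarrow> y \<noteq> x \<Longrightarrow> prov T (Imp (Ex x p) (Ex y (subst p x y)))"
proof -
  assume a: "y \<notin> vars p" "y \<noteq> x"
  have "prov T (Imp (subst (subst p x y) y x) (Ex y (subst p x y)))"
    by (rule prov.exI) (rule substitutable_back[OF a(1)])
  then have "prov T (Imp p (Ex y (subst p x y)))" using subst_back[OF a(1)] by simp
  then show ?thesis by (rule prov.genEx) (use fv_subst a in auto)
qed

lemma ball_rename: "y \<notin> vars p \<Longrightarrow> y \<noteq> x \<Longrightarrow> y \<noteq> z \<Longrightarrow> x \<noteq> z
  \<Longrightarrow> prov T (Imp (BAll x z p) (BAll y z (subst p x y)))"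
proof -
  assume a: "y \<notin> vars p" "y \<noteq> x" "y \<noteq> z" "x \<noteq> z"
  have "prov T (Imp (All x (Imp (Mem x z) p)) (All y (subst (Imp (Mem x z) p) x y)))"
    by (rule all_rename) (use a in auto)
  then have "prov T (Imp (All x (Imp (Mem x z) p)) (All y (Imp (Mem y z) (subst p x y))))"
    using a by (simp add: rn_def)
  then show ?thesis using a by (meson itrans prov.ballD prov.ballI)
qed



lemma emptyset_inst:
  assumes T: "EmptySet \<in> T" and d: "e \<noteq> t"
  shows "prov T (Ex e (All t (Imp (Mem t e) Bot)))"
proof -
  define N where "N = e + t + 2"
  have s0: "prov T (Ex 0 (All 1 (Imp (Mem 1 0) Bot)))"
    using prov.ax[OF T] by (simp add: EmptySet_def Neg_def)
  have "prov T (Imp (Ex 0 (All 1 (Imp (Mem 1 0) Bot))) (Ex N (All 1 (Imp (Mem 1 N) Bot))))"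
    using ex_rename[of N "All 1 (Imp (Mem 1 0) Bot)" 0 T] by (simp add: N_def rn_def)
  from prov.mp[OF this s0] have s1: "prov T (Ex N (All 1 (Imp (Mem 1 N) Bot)))" .
  have "prov T (Imp (Ex N (All 1 (Imp (Mem 1 N) Bot))) (Ex N (All (N+1) (Imp (Mem (N+1) N) Bot))))"
    using ex_mono[OF all_rename[of "N+1" "Imp (Mem 1 N) Bot" 1 T]] by (simp add: N_def rn_def)
  from prov.mp[OF this s1] have s2: "prov T (Ex N (All (N+1) (Imp (Mem (N+1) N) Bot)))" .
  have "prov T (Imp (Ex N (All (N+1) (Imp (Mem (N+1) N) Bot))) (Ex N (All t (Imp (Mem t N) Bot))))"
    using ex_mono[OF all_rename[of t "Imp (Mem (N+1) N) Bot" "N+1" T]] by (simp add: N_def rn_def)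
  from prov.mp[OF this s2] have s3: "prov T (Ex N (All t (Imp (Mem t N) Bot)))" .
  have "prov T (Imp (Ex N (All t (Imp (Mem t N) Bot))) (Ex e (All t (Imp (Mem t e) Bot))))"
    using ex_rename[of e "All t (Imp (Mem t N) Bot)" N T] d by (simp add: N_def rn_def)
  from prov.mp[OF this s3] show ?thesis .
qed

lemma pairing_inst:
  assumes T: "Pairing \<in> T" and d: "c \<noteq> u" "c \<noteq> v"
  shows "prov T (Ex c (Conj (Mem u c) (Mem v c)))"
proof -
  define N where "N = u + v + c + 3"
  have s0: "prov T (All 0 (All 1 (Ex 2 (Conj (Mem 0 2) (Mem 1 2)))))"
    using prov.ax[OF T] by (simp add: Pairing_def)
  have "prov T (Imp (All 0 (All 1 (Ex 2 (Conj (Mem 0 2) (Mem 1 2))))) (All N (All 1 (Ex 2 (Conj (Mem N 2) (Mem 1 2))))))"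
    using all_rename[of N "All 1 (Ex 2 (Conj (Mem 0 2) (Mem 1 2)))" 0 T] by (simp add: N_def rn_def)
  from prov.mp[OF this s0] have s1: "prov T (All N (All 1 (Ex 2 (Conj (Mem N 2) (Mem 1 2)))))" .
  have "prov T (Imp (All N (All 1 (Ex 2 (Conj (Mem N 2) (Mem 1 2))))) (All N (All (N+1) (Ex 2 (Conj (Mem N 2) (Mem (N+1) 2))))))"
    using all_mono[OF all_rename[of "N+1" "Ex 2 (Conj (Mem N 2) (Mem 1 2))" 1 T]] by (simp add: N_def rn_def)
  from prov.mp[OF this s1] have s2: "prov T (All N (All (N+1) (Ex 2 (Conj (Mem N 2) (Mem (N+1) 2)))))" .
  have "prov T (Imp (All N (All (N+1) (Ex 2 (Conj (Mem N 2) (Mem (N+1) 2))))) (All N (All (N+1) (Ex (N+2) (Conj (Mem N (N+2)) (Mem (N+1) (N+2)))))))"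
    using all_mono[OF all_mono[OF ex_rename[of "N+2" "Conj (Mem N 2) (Mem (N+1) 2)" 2 T]]] by (simp add: N_def rn_def)
  from prov.mp[OF this s2] have s3: "prov T (All N (All (N+1) (Ex (N+2) (Conj (Mem N (N+2)) (Mem (N+1) (N+2))))))" .
  have "prov T (Imp (All N (All (N+1) (Ex (N+2) (Conj (Mem N (N+2)) (Mem (N+1) (N+2)))))) (All (N+1) (Ex (N+2) (Conj (Mem u (N+2)) (Mem (N+1) (N+2))))))"
    using prov.allE[of u N "All (N+1) (Ex (N+2) (Conj (Mem N (N+2)) (Mem (N+1) (N+2))))" T] by (simp add: N_def rn_def)
  from prov.mp[OF this s3] have s4: "prov T (All (N+1) (Ex (N+2) (Conj (Mem u (N+2)) (Mem (N+1) (N+2)))))" .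
  have "prov T (Imp (All (N+1) (Ex (N+2) (Conj (Mem u (N+2)) (Mem (N+1) (N+2))))) (Ex (N+2) (Conj (Mem u (N+2)) (Mem v (N+2)))))"
    using prov.allE[of v "N+1" "Ex (N+2) (Conj (Mem u (N+2)) (Mem (N+1) (N+2)))" T] by (simp add: N_def rn_def)
  from prov.mp[OF this s4] have s5: "prov T (Ex (N+2) (Conj (Mem u (N+2)) (Mem v (N+2))))" .
  have "prov T (Imp (Ex (N+2) (Conj (Mem u (N+2)) (Mem v (N+2)))) (Ex c (Conj (Mem u c) (Mem v c))))"
    using ex_rename[of c "Conj (Mem u (N+2)) (Mem v (N+2))" "N+2" T] d by (simp add: N_def rn_def)
  from prov.mp[OF this s5] show ?thesis .
qed

lemma union_inst:
  assumes T: "Union \<in> T" and d: "U \<noteq> b" "U \<noteq> v" "U \<noteq> w" "v \<noteq> b" "w \<noteq> v"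
  shows "prov T (Ex U (BAll v b (BAll w v (Mem w U))))"
proof -
  define N where "N = U + v + w + b + 4"
  have s0: "prov T (All 0 (Ex 1 (BAll 2 0 (BAll 3 2 (Mem 3 1)))))"
    using prov.ax[OF T] by (simp add: Union_def)
  have "prov T (Imp (All 0 (Ex 1 (BAll 2 0 (BAll 3 2 (Mem 3 1))))) (All N (Ex 1 (BAll 2 N (BAll 3 2 (Mem 3 1))))))"
    using all_rename[of N "Ex 1 (BAll 2 0 (BAll 3 2 (Mem 3 1)))" 0 T] by (simp add: N_def rn_def)
  from prov.mp[OF this s0] have s1: "prov T (All N (Ex 1 (BAll 2 N (BAll 3 2 (Mem 3 1)))))" .
  have "prov T (Imp (All N (Ex 1 (BAll 2 N (BAll 3 2 (Mem 3 1))))) (All N (Ex (N+1) (BAll 2 N (BAll 3 2 (Mem 3 (N+1)))))))"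
    using all_mono[OF ex_rename[of "N+1" "BAll 2 N (BAll 3 2 (Mem 3 1))" 1 T]] by (simp add: N_def rn_def)
  from prov.mp[OF this s1] have s2: "prov T (All N (Ex (N+1) (BAll 2 N (BAll 3 2 (Mem 3 (N+1))))))" .
  have "prov T (Imp (All N (Ex (N+1) (BAll 2 N (BAll 3 2 (Mem 3 (N+1)))))) (All N (Ex (N+1) (BAll (N+2) N (BAll 3 (N+2) (Mem 3 (N+1)))))))"
    using all_mono[OF ex_mono[OF ball_rename[of "N+2" "BAll 3 2 (Mem 3 (N+1))" 2 N T]]] by (simp add: N_def rn_def)
  from prov.mp[OF this s2] have s3: "prov T (All N (Ex (N+1) (BAll (N+2) N (BAll 3 (N+2) (Mem 3 (N+1))))))" .
  have "prov T (Imp (All N (Ex (N+1) (BAll (N+2) N (BAll 3 (N+2) (Mem 3 (N+1)))))) (All N (Ex (N+1) (BAll (N+2) N (BAll (N+3) (N+2) (Mem (N+3) (N+1)))))))"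
    using all_mono[OF ex_mono[OF ball_mono[OF ball_rename[of "N+3" "Mem 3 (N+1)" 3 "N+2" T], of "N+2" N]]] by (simp add: N_def rn_def)
  from prov.mp[OF this s3] have s4: "prov T (All N (Ex (N+1) (BAll (N+2) N (BAll (N+3) (N+2) (Mem (N+3) (N+1))))))" .
  have "prov T (Imp (All N (Ex (N+1) (BAll (N+2) N (BAll (N+3) (N+2) (Mem (N+3) (N+1)))))) (Ex (N+1) (BAll (N+2) b (BAll (N+3) (N+2) (Mem (N+3) (N+1))))))"
    using prov.allE[of b N "Ex (N+1) (BAll (N+2) N (BAll (N+3) (N+2) (Mem (N+3) (N+1))))" T] by (simp add: N_def rn_def)
  from prov.mp[OF this s4] have s5: "prov T (Ex (N+1) (BAll (N+2) b (BAll (N+3) (N+2) (Mem (N+3) (N+1)))))" .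
  have "prov T (Imp (Ex (N+1) (BAll (N+2) b (BAll (N+3) (N+2) (Mem (N+3) (N+1))))) (Ex U (BAll (N+2) b (BAll (N+3) (N+2) (Mem (N+3) U)))))"
    using ex_rename[of U "BAll (N+2) b (BAll (N+3) (N+2) (Mem (N+3) (N+1)))" "N+1" T] d by (simp add: N_def rn_def)
  from prov.mp[OF this s5] have s6: "prov T (Ex U (BAll (N+2) b (BAll (N+3) (N+2) (Mem (N+3) U))))" .
  have "prov T (Imp (Ex U (BAll (N+2) b (BAll (N+3) (N+2) (Mem (N+3) U)))) (Ex U (BAll v b (BAll (N+3) v (Mem (N+3) U)))))"
    using ex_mono[OF ball_rename[of v "BAll (N+3) (N+2) (Mem (N+3) U)" "N+2" b T]] d by (simp add: N_def rn_def)
  from prov.mp[OF this s6] have s7: "prov T (Ex U (BAll v b (BAll (N+3) v (Mem (N+3) U))))" .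
  have "prov T (Imp (Ex U (BAll v b (BAll (N+3) v (Mem (N+3) U)))) (Ex U (BAll v b (BAll w v (Mem w U)))))"
    using ex_mono[OF ball_mono[OF ball_rename[of w "Mem (N+3) U" "N+3" v T], of v b]] d by (simp add: N_def rn_def)
  from prov.mp[OF this s7] show ?thesis .
qed



lemma nf_rel: "m \<notin> vars p \<Longrightarrow> m \<noteq> Z \<Longrightarrow> m \<notin> fv (rel Z p)"
  using fv_rel fv_vars by blast

lemma subst_rel_fresh: "U \<notin> vars p \<Longrightarrow> U \<noteq> A \<Longrightarrow> substitutable U A (rel A p)"
  using vars_rel substitutable_fresh by blast

lemma anti:
  assumes "PiF p" "C \<notin> vars p" "D \<notin> vars p" "w \<noteq> C" "w \<noteq> D"
  shows "prov T (Imp (Conj (BAll w C (Mem w D)) (rel D p)) (rel C p))"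
  using assms
proof (induct rule: PiF.induct)
  case (1 p)
  then show ?case by (simp add: rel_Delta0 hyp)
next
  case (2 p q)
  let ?S = "BAll w C (Mem w D)"
  have a: "prov T (Imp (Conj ?S (Conj (rel D p) (rel D q))) (rel C p))"
    by (rule itrans[OF conjC[OF conj1C[OF I] conj1C[OF hyp]]]) (use 2 in simp)
  have b: "prov T (Imp (Conj ?S (Conj (rel D p) (rel D q))) (rel C q))"
    by (rule itrans[OF conjC[OF conj1C[OF I] conj2C[OF hyp]]]) (use 2 in simp)
  show ?case using conjC[OF a b] by simp
next
  case (3 p q)
  let ?S = "BAll w C (Mem w D)"
  let ?K = "Conj ?S (Disj (rel D p) (rel D q))"
  have a: "prov T (Imp (Conj ?K (rel D p)) (Disj (rel C p) (rel C q)))"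
    by (rule itrans[OF itrans[OF conjC[OF lift[OF conj1C[OF I]] hyp]] prov.disjI1]) (use 3 in simp)
  have b: "prov T (Imp (Conj ?K (rel D q)) (Disj (rel C p) (rel C q)))"
    by (rule itrans[OF itrans[OF conjC[OF lift[OF conj1C[OF I]] hyp]] prov.disjI2]) (use 3 in simp)
  show ?case using disjEC[OF hyp a b] by simp
next
  case (4 p x)
  let ?S = "BAll w C (Mem w D)"
  let ?K = "Conj ?S (BAll x D (rel D p))"
  have xC: "x \<noteq> C" "x \<noteq> D" using 4 by auto
  have m1: "prov T (Imp ?K (Imp (Mem x C) (Mem x D)))"
    using ballEC[OF conj1C[OF I[of T ?K]], where z = x] 4 by (auto simp: rn_def)
  have m2: "prov T (Imp (Conj ?K (Mem x C)) (Mem x D))"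
    by (rule mpC[OF lift[OF m1] hyp])
  have r: "prov T (Imp (Conj ?K (Mem x C)) (rel D p))"
    by (rule mpC[OF lift[OF ballEC'[OF conj2C[OF I]]] m2]) (use xC in simp)
  have s: "prov T (Imp (Conj ?K (Mem x C)) ?S)" by (rule lift[OF conj1C[OF I]])
  have "prov T (Imp (Conj ?K (Mem x C)) (rel C p))"
    by (rule itrans[OF conjC[OF s r]]) (use 4 in simp)
  then have "prov T (Imp ?K (BAll x C (rel C p)))"
    by (rule ballIC) (use 4 xC in auto)
  then show ?case by simp
next
  case (5 x y p)
  let ?S = "BAll w C (Mem w D)"
  let ?K = "Conj ?S (BAll x y (rel D p))"
  have xC: "x \<noteq> C" "x \<noteq> D" using 5 by auto
  have r: "prov T (Imp (Conj ?K (Mem x y)) (rel D p))"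
    by (rule mpC[OF lift[OF ballEC'[OF conj2C[OF I]]] hyp]) (use 5 in simp)
  have s: "prov T (Imp (Conj ?K (Mem x y)) ?S)" by (rule lift[OF conj1C[OF I]])
  have "prov T (Imp (Conj ?K (Mem x y)) (rel C p))"
    by (rule itrans[OF conjC[OF s r]]) (use 5 in simp)
  then have "prov T (Imp ?K (BAll x y (rel C p)))"
    by (rule ballIC) (use 5 xC in auto)
  then show ?case by simp
next
  case (6 x y p)
  let ?S = "BAll w C (Mem w D)"
  let ?K = "Conj ?S (BEx x y (rel D p))"
  let ?K2 = "Conj ?K (Conj (Mem x y) (rel D p))"
  have xC: "x \<noteq> C" "x \<noteq> D" using 6 by auto
  have s: "prov T (Imp ?K2 ?S)" by (rule lift[OF conj1C[OF I]])
  have r: "prov T (Imp ?K2 (rel C p))"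
    by (rule itrans[OF conjC[OF s conj2C[OF hyp]]]) (use 6 in simp)
  have "prov T (Imp ?K2 (BEx x y (rel C p)))"
    by (rule bexIC'[OF conj1C[OF hyp] r]) (use 6 in simp)
  then have "prov T (Imp ?K (BEx x y (rel C p)))"
    by (rule bexEC[OF conj2C[OF I]]) (use 6 xC in auto)
  then show ?case by simp
qed

lemma down:
  assumes "PiF p" "C \<notin> vars p"
  shows "prov T (Imp p (rel C p))"
  using assms
proof (induct rule: PiF.induct)
  case (1 p)
  then show ?case by (simp add: rel_Delta0 I)
next
  case (2 p q)
  then show ?case by (simp add: conjC itrans[OF prov.conjE1] itrans[OF prov.conjE2])
next
  case (3 p q)
  have a: "prov T (Imp (Conj (Disj p q) p) (Disj (rel C p) (rel C q)))"
    by (rule itrans[OF itrans[OF hyp] prov.disjI1]) (use 3 in simp)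
  have b: "prov T (Imp (Conj (Disj p q) q) (Disj (rel C p) (rel C q)))"
    by (rule itrans[OF itrans[OF hyp] prov.disjI2]) (use 3 in simp)
  show ?case using disjEC[OF I a b] by simp
next
  case (4 p x)
  have "prov T (Imp (Conj (All x p) (Mem x C)) (rel C p))"
    by (rule itrans[OF lift[OF allEC'[OF I]]]) (use 4 in simp)
  then have "prov T (Imp (All x p) (BAll x C (rel C p)))"
    by (rule ballIC) (use 4 in auto)
  then show ?case by simp
next
  case (5 x y p)
  then show ?case by (simp add: ball_mono)
next
  case (6 x y p)
  then show ?case by (simp add: bex_mono)
qed

lemma sup_inst:
  assumes T: "Pairing \<in> T" "Union \<in> T" and d: "distinct [x, A, U, w, c, d, v]"
  shows "prov T (Ex U (Conj (BAll w A (Mem w U)) (Mem x U)))"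
proof -
  let ?Gl = "Ex U (Conj (BAll w A (Mem w U)) (Mem x U))"
  let ?K1 = "Conj Top (Conj (Mem x c) (Mem x c))"
  let ?K2 = "Conj ?K1 (Conj (Mem A d) (Mem c d))"
  let ?SB = "BAll v d (BAll w v (Mem w U))"
  let ?K3 = "Conj ?K2 ?SB"
  have p1: "prov T (Ex c (Conj (Mem x c) (Mem x c)))" by (rule pairing_inst) (use T d in auto)
  have p2: "prov T (Ex d (Conj (Mem A d) (Mem c d)))" by (rule pairing_inst) (use T d in auto)
  have p3: "prov T (Ex U ?SB)" by (rule union_inst) (use T d in auto)
  have sb: "prov T (Imp ?K3 ?SB)" by (rule hyp)
  have e1: "prov T (Imp ?K3 (Imp (Mem A d) (BAll w A (Mem w U))))"
    using ballEC[OF sb, of A] d by (auto simp: rn_def)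
  have e2: "prov T (Imp ?K3 (Imp (Mem c d) (BAll w c (Mem w U))))"
    using ballEC[OF sb, of c] d by (auto simp: rn_def)
  have mA: "prov T (Imp ?K3 (Mem A d))" by (rule conj1C[OF conj2C[OF conj1C[OF I]]])
  have mc: "prov T (Imp ?K3 (Mem c d))" by (rule conj2C[OF conj2C[OF conj1C[OF I]]])
  have mx: "prov T (Imp ?K3 (Mem x c))" by (rule conj1C[OF conj2C[OF conj1C[OF conj1C[OF I]]]])
  have bc: "prov T (Imp ?K3 (BAll w c (Mem w U)))" by (rule mpC[OF e2 mc])
  have e3: "prov T (Imp ?K3 (Imp (Mem x c) (Mem x U)))"
    using ballEC[OF bc, of x] d by (auto simp: rn_def)
  have "prov T (Imp ?K3 (Conj (BAll w A (Mem w U)) (Mem x U)))"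
    by (rule conjC[OF mpC[OF e1 mA] mpC[OF e3 mx]])
  then have "prov T (Imp ?K3 ?Gl)" by (rule exIC')
  then have "prov T (Imp ?K2 ?Gl)" by (rule exEC[OF weaken[OF p3]]) (use d in auto)
  then have "prov T (Imp ?K1 ?Gl)" by (rule exEC[OF weaken[OF p2]]) (use d in auto)
  then have "prov T (Imp Top ?Gl)" by (rule exEC[OF weaken[OF p1]]) (use d in auto)
  then show ?thesis using Top by (rule prov.mp)
qed

lemma two_inst:
  assumes T: "EmptySet \<in> T" "Pairing \<in> T" and d: "distinct [a, X, t, e, c]"
  shows "prov T (Ex a (Conj (BEx X a (BAll t X Bot)) (BEx X a (BEx t X Top))))"
proof -
  let ?Gl = "Ex a (Conj (BEx X a (BAll t X Bot)) (BEx X a (BEx t X Top)))"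
  let ?K1 = "Conj Top (All t (Imp (Mem t e) Bot))"
  let ?K2 = "Conj ?K1 (Conj (Mem e c) (Mem e c))"
  let ?K3 = "Conj ?K2 (Conj (Mem e a) (Mem c a))"
  have p1: "prov T (Ex e (All t (Imp (Mem t e) Bot)))" by (rule emptyset_inst) (use T d in auto)
  have p2: "prov T (Ex c (Conj (Mem e c) (Mem e c)))" by (rule pairing_inst) (use T d in auto)
  have p3: "prov T (Ex a (Conj (Mem e a) (Mem c a)))" by (rule pairing_inst) (use T d in auto)
  have emp: "prov T (Imp ?K3 (BAll t e Bot))"
    by (rule itrans[OF conj2C[OF conj1C[OF conj1C[OF I]]] prov.ballI]) (use d in auto)
  have b1: "prov T (Imp ?K3 (BEx X a (BAll t X Bot)))"
    by (rule bexIC[OF conj1C[OF hyp], where p = "BAll t X Bot" and x = X]) (use d emp in \<open>auto simp: rn_def\<close>)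
  have inh: "prov T (Imp ?K3 (BEx t c Top))"
    by (rule bexIC[OF conj1C[OF conj2C[OF conj1C[OF I]]], where p = Top and x = t]) (use d in \<open>auto simp: weaken Top\<close>)
  have b2: "prov T (Imp ?K3 (BEx X a (BEx t X Top)))"
    by (rule bexIC[OF conj2C[OF hyp], where p = "BEx t X Top" and x = X]) (use d inh in \<open>auto simp: rn_def\<close>)
  have "prov T (Imp ?K3 ?Gl)" by (rule exIC'[OF conjC[OF b1 b2]])
  then have "prov T (Imp ?K2 ?Gl)" by (rule exEC[OF weaken[OF p3]]) (use d in auto)
  then have "prov T (Imp ?K1 ?Gl)" by (rule exEC[OF weaken[OF p2]]) (use d in auto)
  then have "prov T (Imp Top ?Gl)" by (rule exEC[OF weaken[OF p1]]) (use d in auto)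
  then show ?thesis using Top by (rule prov.mp)
qed

lemma fresh_N: "\<exists>N. \<forall>v\<in>S. v < N" if "finite (S::nat set)"
  using that finite_nat_set_iff_bounded by auto

lemma bnd_sub: "\<forall>v\<in>S. v < (N::nat) \<Longrightarrow> V \<subseteq> S \<Longrightarrow> N \<le> m \<Longrightarrow> m \<notin> V" by (meson leD subsetD)
lemma bnd_el: "\<forall>v\<in>S. v < (N::nat) \<Longrightarrow> a \<in> S \<Longrightarrow> N \<le> m \<Longrightarrow> m \<noteq> a" by (meson leD)
lemma bnd_el': "\<forall>v\<in>S. v < (N::nat) \<Longrightarrow> a \<in> S \<Longrightarrow> N \<le> m \<Longrightarrow> a \<noteq> m" by (meson leD)

lemma Delta0_Top: "Delta0 Top" unfolding Top_def by (intro Delta0.intros)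

lemma persist:
  assumes T: "EmptySet \<in> T" "Pairing \<in> T" "Union \<in> T" "Delta0Uniformity \<subseteq> T"
  shows "PiF p \<Longrightarrow> A \<notin> vars p \<Longrightarrow> prov T (Imp (All A (rel A p)) p)"
proof (induct p arbitrary: A rule: PiF.induct)
  case (1 p A)
  then show ?case by (simp add: rel_Delta0 allEC'[OF I])
next
  case (2 p q A)
  let ?H = "All A (Conj (rel A p) (rel A q))"
  have a: "prov T (Imp ?H (All A (rel A p)))" by (rule allIC[OF conj1C[OF allEC'[OF I]]]) simp
  have b: "prov T (Imp ?H (All A (rel A q)))" by (rule allIC[OF conj2C[OF allEC'[OF I]]]) simp
  have "prov T (Imp ?H (Conj p q))"
    using conjC[OF itrans[OF a 2(2)] itrans[OF b 2(4)]] 2(5) by simp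
  then show ?case by simp
next
  case (3 p q A)
  obtain N where N: "\<forall>v\<in>vars p \<union> vars q \<union> {A}. v < N"
    using fresh_N[of "vars p \<union> vars q \<union> {A}"] finite_vars by auto
  have fp: "\<And>m. N \<le> m \<Longrightarrow> m \<notin> vars p" by (rule bnd_sub[OF N]) auto
  have fq: "\<And>m. N \<le> m \<Longrightarrow> m \<notin> vars q" by (rule bnd_sub[OF N]) auto
  have [simp]: "\<And>m. N \<le> m \<Longrightarrow> m \<noteq> A" by (rule bnd_el[OF N], simp, assumption)
  have [simp]: "\<And>m. N \<le> m \<Longrightarrow> A \<noteq> m" by (rule bnd_el'[OF N], simp, assumption)
  have hA: "True" by simp
  note fr = fp fq hA nf_rel fv_notin
  let ?a = N and ?X = "N+1" and ?t = "N+2" and ?Y = "N+3" and ?B = "N+4" and ?U = "N+5"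
    and ?v = "N+6" and ?w = "N+7"
  let ?Emp = "BAll ?t ?X Bot" and ?Inh = "BEx ?t ?X Top"
  let ?chi = "Disj (Conj ?Emp (rel ?Y p)) (Conj ?Inh (rel ?Y q))"
  let ?H = "All A (Disj (rel A p) (rel A q))"
  let ?E1 = "BEx ?X ?a ?Emp" and ?E2 = "BEx ?X ?a ?Inh"
  let ?K = "Conj ?H (Conj ?E1 ?E2)"
  let ?SB = "BAll ?v ?B (BAll ?w ?v (Mem ?w ?U))"
  let ?K4 = "Conj ?K ?SB"
  have un: "prov T (Ex ?U ?SB)" by (rule union_inst[OF T(3)]) simp_all
  have tw: "prov T (Ex ?a (Conj ?E1 ?E2))"
    by (rule two_inst[OF T(1,2), where e = "N+8" and c = "N+9"]) simp
  let ?G = "BEx ?X ?a (BAll ?Y ?B ?chi)"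
  have d0: "Delta0 ?chi"
    by (intro Delta0.intros Delta0_rel Delta0_Top) (use 3 fp fq in auto)
  have Bnf: "?B \<notin> fv ?chi" by (simp add: fr)
  have uinst: "prov T (Imp (All ?B ?G) (BEx ?X ?a (All ?Y ?chi)))"
  proof (rule prov.ax)
    have "Imp (All ?B ?G) (BEx ?X ?a (All ?Y ?chi)) \<in> UniformitySchema Delta0"
      unfolding UniformitySchema_def using d0 Bnf by fastforce
    then show "Imp (All ?B ?G) (BEx ?X ?a (All ?Y ?chi)) \<in> T" using T(4) by (auto simp: Delta0Uniformity_def)
  qed
  have hK: "prov T (Imp ?K (subst (Disj (rel A p) (rel A q)) A ?U))"
    by (rule allEC[OF conj1C[OF I]]) (use 3 in \<open>simp add: subst_rel_fresh fp fq hA\<close>)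
  then have k4H: "prov T (Imp ?K4 (Disj (rel ?U p) (rel ?U q)))"
    using 3 by (simp add: subst_rel lift)
  let ?K5 = "Conj ?K4 (rel ?U p)"
  let ?K6 = "Conj ?K5 (Conj (Mem ?X ?a) ?Emp)"
  let ?K7 = "Conj ?K6 (Mem ?Y ?B)"
  have sb7: "prov T (Imp ?K7 ?SB)" by (rule conj2C[OF conj1C[OF conj1C[OF conj1C[OF I]]]])
  have sub7: "prov T (Imp ?K7 (Imp (Mem ?Y ?B) (BAll ?w ?Y (Mem ?w ?U))))"
    using ballEC[OF sb7, where z = "?Y"] by (simp add: rn_def)
  have relY7: "prov T (Imp ?K7 (rel ?Y p))"
    by (rule itrans[OF conjC[OF mpC[OF sub7 hyp] conj2C[OF conj1C[OF conj1C[OF I]]]] anti]) (use 3 fp in auto)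
  have chi7: "prov T (Imp ?K7 ?chi)"
    by (rule itrans[OF conjC[OF conj2C[OF conj2C[OF conj1C[OF I]]] relY7] prov.disjI1])
  have "prov T (Imp ?K6 (BAll ?Y ?B ?chi))" by (rule ballIC[OF chi7]) (simp_all add: fr)
  then have "prov T (Imp ?K6 ?G)" by (rule bexIC'[OF conj1C[OF hyp]]) simp
  then have brp: "prov T (Imp ?K5 ?G)"
    by (rule bexEC[OF conj1C[OF conj2C[OF conj1C[OF conj1C[OF I]]]]]) (simp_all add: fr)
  let ?L5 = "Conj ?K4 (rel ?U q)"
  let ?L6 = "Conj ?L5 (Conj (Mem ?X ?a) ?Inh)"
  let ?L7 = "Conj ?L6 (Mem ?Y ?B)"
  have sbL7: "prov T (Imp ?L7 ?SB)" by (rule conj2C[OF conj1C[OF conj1C[OF conj1C[OF I]]]])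
  have subL7: "prov T (Imp ?L7 (Imp (Mem ?Y ?B) (BAll ?w ?Y (Mem ?w ?U))))"
    using ballEC[OF sbL7, where z = "?Y"] by (simp add: rn_def)
  have relYL7: "prov T (Imp ?L7 (rel ?Y q))"
    by (rule itrans[OF conjC[OF mpC[OF subL7 hyp] conj2C[OF conj1C[OF conj1C[OF I]]]] anti]) (use 3 fq in auto)
  have chiL7: "prov T (Imp ?L7 ?chi)"
    by (rule itrans[OF conjC[OF conj2C[OF conj2C[OF conj1C[OF I]]] relYL7] prov.disjI2])
  have "prov T (Imp ?L6 (BAll ?Y ?B ?chi))" by (rule ballIC[OF chiL7]) (simp_all add: fr)
  then have "prov T (Imp ?L6 ?G)" by (rule bexIC'[OF conj1C[OF hyp]]) simp
  then have brq: "prov T (Imp ?L5 ?G)"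
    by (rule bexEC[OF conj2C[OF conj2C[OF conj1C[OF conj1C[OF I]]]]]) (simp_all add: fr)
  have "prov T (Imp ?K4 ?G)" by (rule disjEC[OF k4H brp brq])
  then have "prov T (Imp ?K ?G)"
    by (rule exEC[OF weaken[OF un]]) (simp_all add: fr)
  then have sA: "prov T (Imp ?K (All ?B ?G))" by (rule allIC) (simp add: fr)
  have sB: "prov T (Imp ?K (BEx ?X ?a (All ?Y ?chi)))" by (rule itrans[OF sA uinst])
  let ?K8 = "Conj ?K (Conj (Mem ?X ?a) (All ?Y ?chi))"
  have chi8: "prov T (Imp ?K8 ?chi)" by (rule allEC'[OF conj2C[OF hyp]])
  have D: "prov T (Imp ?K8 (Disj ?Emp ?Inh))"
    by (rule disjEC[OF chi8 itrans[OF conj1C[OF hyp] prov.disjI1] itrans[OF conj1C[OF hyp] prov.disjI2]])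
  let ?K9 = "Conj ?K8 ?Emp"
  have chi9: "prov T (Imp ?K9 ?chi)" by (rule allEC'[OF conj2C[OF conj2C[OF conj1C[OF I]]]])
  let ?K10 = "Conj ?K9 (Conj ?Inh (rel ?Y q))"
  have inner: "prov T (Imp (Conj ?K10 (Conj (Mem ?t ?X) Top)) Bot)"
    by (rule mpC[OF ballEC'[OF conj2C[OF conj1C[OF conj1C[OF I]]]] conj1C[OF hyp]]) simp
  have sub2: "prov T (Imp ?K10 (rel ?Y p))"
    by (rule botC[OF bexEC[OF conj1C[OF hyp] inner]]) (simp_all add: fr)
  have "prov T (Imp ?K9 (rel ?Y p))" by (rule disjEC[OF chi9 conj2C[OF hyp] sub2])
  then have "prov T (Imp ?K9 (All ?Y (rel ?Y p)))" by (rule allIC) (simp add: fr)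
  then have bemp: "prov T (Imp ?K9 (Disj p q))"
    by (rule itrans[OF itrans[OF _ 3(2)] prov.disjI1]) (simp add: fp)
  let ?J9 = "Conj ?K8 ?Inh"
  have chiJ9: "prov T (Imp ?J9 ?chi)" by (rule allEC'[OF conj2C[OF conj2C[OF conj1C[OF I]]]])
  let ?J10 = "Conj ?J9 (Conj ?Emp (rel ?Y p))"
  have innerJ: "prov T (Imp (Conj ?J10 (Conj (Mem ?t ?X) Top)) Bot)"
    by (rule mpC[OF ballEC'[OF conj1C[OF conj2C[OF conj1C[OF I]]]] conj1C[OF hyp]]) simp
  have sub1J: "prov T (Imp ?J10 (rel ?Y q))"
    by (rule botC[OF bexEC[OF conj2C[OF conj1C[OF I]] innerJ]]) (simp_all add: fr)
  have "prov T (Imp ?J9 (rel ?Y q))" by (rule disjEC[OF chiJ9 sub1J conj2C[OF hyp]])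
  then have "prov T (Imp ?J9 (All ?Y (rel ?Y q)))" by (rule allIC) (simp add: fr)
  then have binh: "prov T (Imp ?J9 (Disj p q))"
    by (rule itrans[OF itrans[OF _ 3(4)] prov.disjI2]) (simp add: fq)
  have "prov T (Imp ?K8 (Disj p q))" by (rule disjEC[OF D bemp binh])
  then have "prov T (Imp ?K (Disj p q))"
    by (rule bexEC[OF sB]) (simp_all add: fr)
  then have "prov T (Imp ?H (Disj p q))"
    by (rule exEC[OF weaken[OF tw]]) (simp_all add: fr)
  then show ?case by simp
next
  case (4 p x A)
  obtain N where N: "\<forall>v\<in>vars p \<union> {A, x}. v < N"
    using fresh_N[of "vars p \<union> {A, x}"] finite_vars by auto
  have fp: "\<And>m. N \<le> m \<Longrightarrow> m \<notin> vars p" by (rule bnd_sub[OF N]) auto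
  have [simp]: "\<And>m. N \<le> m \<Longrightarrow> m \<noteq> A" by (rule bnd_el[OF N], simp, assumption)
  have [simp]: "\<And>m. N \<le> m \<Longrightarrow> A \<noteq> m" by (rule bnd_el'[OF N], simp, assumption)
  have [simp]: "\<And>m. N \<le> m \<Longrightarrow> m \<noteq> x" by (rule bnd_el[OF N], simp, assumption)
  have [simp]: "\<And>m. N \<le> m \<Longrightarrow> x \<noteq> m" by (rule bnd_el'[OF N], simp, assumption)
  have hA: "True" by simp
  note fr = fp hA nf_rel fv_notin
  have Ax: "A \<noteq> x" "A \<notin> vars p" using 4 by auto
  let ?U = N and ?w = "N+1"
  let ?H = "All A (BAll x A (rel A p))"
  let ?K = "Conj ?H (Conj (BAll ?w A (Mem ?w ?U)) (Mem x ?U))"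
  have sup: "prov T (Ex ?U (Conj (BAll ?w A (Mem ?w ?U)) (Mem x ?U)))"
    by (rule sup_inst[OF T(2,3), where c = "N+2" and d = "N+3" and v = "N+4"]) (use Ax hA in auto)
  have "prov T (Imp ?K (subst (BAll x A (rel A p)) A ?U))"
    by (rule allEC[OF conj1C[OF I]]) (use Ax hA in \<open>simp add: subst_rel_fresh fp\<close>)
  then have hU: "prov T (Imp ?K (BAll x ?U (rel ?U p)))" using Ax by (simp add: rn_def subst_rel)
  have relU: "prov T (Imp ?K (rel ?U p))" by (rule mpC[OF ballEC'[OF hU] conj2C[OF hyp]]) simp
  have relA: "prov T (Imp ?K (rel A p))"
    by (rule itrans[OF conjC[OF conj1C[OF hyp] relU] anti]) (use 4 Ax fp hA in auto)
  have "prov T (Imp ?H (rel A p))" by (rule exEC[OF weaken[OF sup] relA]) (simp_all add: fr)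
  then have "prov T (Imp ?H (All A (rel A p)))" by (rule allIC) simp
  then have "prov T (Imp ?H p)" by (rule itrans[OF _ 4(2)[OF Ax(2)]])
  then have "prov T (Imp ?H (All x p))" by (rule allIC) simp
  then show ?case by simp
next
  case (5 x y p A)
  have Ax: "A \<noteq> x" "A \<noteq> y" "A \<notin> vars p" using 5 by auto
  let ?H = "All A (BAll x y (rel A p))"
  let ?K = "Conj ?H (Mem x y)"
  have "prov T (Imp ?K (rel A p))" by (rule mpC[OF ballEC'[OF lift[OF allEC'[OF I]]] hyp]) (use 5 in simp)
  then have "prov T (Imp ?K (All A (rel A p)))" by (rule allIC) (use Ax in simp)
  then have "prov T (Imp ?K p)" by (rule itrans[OF _ 5(3)[OF Ax(3)]])
  then have "prov T (Imp ?H (BAll x y p))" by (rule ballIC) (use 5 in simp_all)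
  then show ?case by simp
next
  case (6 x y p A)
  obtain N where N: "\<forall>v\<in>vars p \<union> {A, x, y}. v < N"
    using fresh_N[of "vars p \<union> {A, x, y}"] finite_vars by auto
  have fp: "\<And>m. N \<le> m \<Longrightarrow> m \<notin> vars p" by (rule bnd_sub[OF N]) auto
  have [simp]: "\<And>m. N \<le> m \<Longrightarrow> m \<noteq> A" by (rule bnd_el[OF N], simp, assumption)
  have [simp]: "\<And>m. N \<le> m \<Longrightarrow> A \<noteq> m" by (rule bnd_el'[OF N], simp, assumption)
  have [simp]: "\<And>m. N \<le> m \<Longrightarrow> m \<noteq> x" by (rule bnd_el[OF N], simp, assumption)
  have [simp]: "\<And>m. N \<le> m \<Longrightarrow> x \<noteq> m" by (rule bnd_el'[OF N], simp, assumption)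
  have [simp]: "\<And>m. N \<le> m \<Longrightarrow> m \<noteq> y" by (rule bnd_el[OF N], simp, assumption)
  have [simp]: "\<And>m. N \<le> m \<Longrightarrow> y \<noteq> m" by (rule bnd_el'[OF N], simp, assumption)
  have hA: "True" by simp
  note fr = fp hA nf_rel fv_notin
  have Ax: "A \<noteq> x" "A \<noteq> y" "A \<notin> vars p" "x \<noteq> y" using 6 by auto
  let ?Y = N and ?B = "N+1" and ?U = "N+2" and ?v = "N+3" and ?w = "N+4"
  let ?H = "All A (BEx x y (rel A p))"
  let ?G = "BEx x y (BAll ?Y ?B (rel ?Y p))"
  let ?SB = "BAll ?v ?B (BAll ?w ?v (Mem ?w ?U))"
  let ?K = "Conj ?H ?SB"
  have un: "prov T (Ex ?U ?SB)" by (rule union_inst[OF T(3)]) simp_all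
  have d0: "Delta0 (rel ?Y p)" by (rule Delta0_rel) (use 6 fp in auto)
  have Bnf: "?B \<notin> fv (rel ?Y p)" by (simp add: fr)
  have uinst: "prov T (Imp (All ?B ?G) (BEx x y (All ?Y (rel ?Y p))))"
  proof (rule prov.ax)
    have "Imp (All ?B ?G) (BEx x y (All ?Y (rel ?Y p))) \<in> UniformitySchema Delta0"
      unfolding UniformitySchema_def using d0 Bnf Ax hA by fastforce
    then show "Imp (All ?B ?G) (BEx x y (All ?Y (rel ?Y p))) \<in> T" using T(4) by (auto simp: Delta0Uniformity_def)
  qed
  have "prov T (Imp ?K (subst (BEx x y (rel A p)) A ?U))"
    by (rule allEC[OF conj1C[OF I]]) (use Ax hA in \<open>simp add: subst_rel_fresh fp\<close>)
  then have hU: "prov T (Imp ?K (BEx x y (rel ?U p)))" using Ax by (simp add: rn_def subst_rel)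
  let ?K2 = "Conj ?K (Conj (Mem x y) (rel ?U p))"
  let ?K3 = "Conj ?K2 (Mem ?Y ?B)"
  have sb3: "prov T (Imp ?K3 ?SB)" by (rule conj2C[OF conj1C[OF conj1C[OF I]]])
  have sub3: "prov T (Imp ?K3 (Imp (Mem ?Y ?B) (BAll ?w ?Y (Mem ?w ?U))))"
    using ballEC[OF sb3, where z = "?Y"] by (simp add: rn_def)
  have relY: "prov T (Imp ?K3 (rel ?Y p))"
    by (rule itrans[OF conjC[OF mpC[OF sub3 hyp] conj2C[OF conj2C[OF conj1C[OF I]]]] anti]) (use 6 fp in auto)
  have "prov T (Imp ?K2 (BAll ?Y ?B (rel ?Y p)))" by (rule ballIC[OF relY]) (simp_all add: fr)
  then have "prov T (Imp ?K2 ?G)" by (rule bexIC'[OF conj1C[OF hyp]]) (use Ax in simp)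
  then have "prov T (Imp ?K ?G)" by (rule bexEC[OF hU]) (use Ax in \<open>simp_all add: fr\<close>)
  then have "prov T (Imp ?H ?G)"
    by (rule exEC[OF weaken[OF un]]) (simp_all add: fr)
  then have "prov T (Imp ?H (All ?B ?G))" by (rule allIC) (simp add: fr)
  then have "prov T (Imp ?H (BEx x y (All ?Y (rel ?Y p))))" by (rule itrans[OF _ uinst])
  then have "prov T (Imp ?H (BEx x y p))"
    by (rule itrans[OF _ bex_mono[OF 6(3)]]) (use Ax fp in auto)
  then show ?case by simp
qed


lemma unif:
  assumes T: "PiPersistence \<subseteq> T" and p: "PiF p" and d: "distinct [A, B, x, y]" and Bp: "B \<notin> fv p"
  shows "prov T (Imp (All B (BEx x A (BAll y B p))) (BEx x A (All y p)))"
proof -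
  obtain N where N: "\<forall>v\<in>vars p \<union> {A, B, x, y}. v < N"
    using fresh_N[of "vars p \<union> {A, B, x, y}"] finite_vars by auto
  have Cp: "N \<notin> vars p" by (rule bnd_sub[OF N]) auto
  have [simp]: "N \<noteq> A" "N \<noteq> B" "N \<noteq> x" "N \<noteq> y" "A \<noteq> N" "B \<noteq> N" "x \<noteq> N" "y \<noteq> N"
    using N by auto
  let ?psi = "BEx x A (All y p)"
  let ?H = "All B (BEx x A (BAll y B p))"
  have pp: "PiF ?psi" using p d by (auto intro: PiF.intros)
  have inst: "prov T (Imp (All N (rel N ?psi)) ?psi)"
  proof (rule prov.ax)
    have "Imp (All N (rel N ?psi)) ?psi \<in> PiPersistence"
      unfolding PiPersistence_def using pp Cp d by fastforce
    then show "Imp (All N (rel N ?psi)) ?psi \<in> T" using T by auto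
  qed
  have "prov T (Imp ?H (subst (BEx x A (BAll y B p)) B N))"
    by (rule allEC[OF I]) (use d Bp in auto)
  then have "prov T (Imp ?H (BEx x A (BAll y N p)))" using d Bp by (simp add: rn_def subst_nofv)
  then have "prov T (Imp ?H (BEx x A (BAll y N (rel N p))))"
    by (rule itrans[OF _ bex_mono[OF ball_mono[OF down[OF p Cp]]]]) (use d in auto)
  then have "prov T (Imp ?H (All N (rel N ?psi)))" by (intro allIC) (use d Bp Cp fv_notin in auto)
  then show ?thesis by (rule itrans[OF _ inst])
qed

lemma cut: "prov S p \<Longrightarrow> (\<And>q. q \<in> S \<Longrightarrow> prov T q) \<Longrightarrow> prov T p"
proof (induct rule: prov.induct)
  case (ax p T) then show ?case by blast
qed (auto intro: prov.intros)

lemma Delta0_PiUnif: "Delta0Uniformity \<subseteq> PiUniformity"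
  unfolding Delta0Uniformity_def PiUniformity_def UniformitySchema_def
  by (auto intro: PiF.intros)

lemma IKP_ax: "EmptySet \<in> IKP_minus_Bounding" "Pairing \<in> IKP_minus_Bounding" "Union \<in> IKP_minus_Bounding"
  unfolding IKP_minus_Bounding_def by auto

lemma A1: "derives (IKP_minus_Bounding \<union> PiPersistence) PiUniformity"
  unfolding derives_def PiUniformity_def UniformitySchema_def
  by (auto intro!: unif)

lemma A2: "derives (IKP_minus_Bounding \<union> Delta0Uniformity) PiPersistence"
  unfolding derives_def PiPersistence_def
  by (auto intro!: persist simp: IKP_ax)

theorem mainTheorem1:
  shows "derives (IKP_minus_Bounding \<union> PiPersistence) PiUniformity
       \<and> derives (IKP_minus_Bounding \<union> PiPersistence) Delta0Uniformity
       \<and> derives (IKP_minus_Bounding \<union> PiUniformity) PiPersistence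
       \<and> derives (IKP_minus_Bounding \<union> PiUniformity) Delta0Uniformity
       \<and> derives (IKP_minus_Bounding \<union> Delta0Uniformity) PiPersistence
       \<and> derives (IKP_minus_Bounding \<union> Delta0Uniformity) PiUniformity"
proof -
  have b: "derives (IKP_minus_Bounding \<union> PiPersistence) Delta0Uniformity"
    using A1 Delta0_PiUnif unfolding derives_def by blast
  have d: "derives (IKP_minus_Bounding \<union> PiUniformity) Delta0Uniformity"
    using Delta0_PiUnif unfolding derives_def by (auto intro: prov.ax)
  have c: "derives (IKP_minus_Bounding \<union> PiUniformity) PiPersistence"
    unfolding derives_def
  proof
    fix q assume "q \<in> PiPersistence"
    then have "prov (IKP_minus_Bounding \<union> Delta0Uniformity) q" using A2 unfolding derives_def by blast
    then show "prov (IKP_minus_Bounding \<union> PiUniformity) q"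
      by (rule cut) (use d in \<open>auto simp: derives_def intro: prov.ax\<close>)
  qed
  have f: "derives (IKP_minus_Bounding \<union> Delta0Uniformity) PiUniformity"
    unfolding derives_def
  proof
    fix q assume "q \<in> PiUniformity"
    then have "prov (IKP_minus_Bounding \<union> PiPersistence) q" using A1 unfolding derives_def by blast
    then show "prov (IKP_minus_Bounding \<union> Delta0Uniformity) q"
      by (rule cut) (use A2 in \<open>auto simp: derives_def intro: prov.ax\<close>)
  qed
  show ?thesis using A1 b c d A2 f by blast
qed


end
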